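(* Let $(G,J,g)$ be a $2$-step nilpotent Lie group equipped with a left-invariant Hermitian structure $(J,g)$, with Lie algebra $(\mathfrak g,\mu)$, and assume that $J\mu(\mathfrak g,\mathfrak g)$ is contained in the center of $\mathfrak g$. Then, with respect to any left-invariant, $g$-unitary $(1,0)$-frame $\{Z_1,\dots,Z_n\}$ on $G$ (with $Z_{\bar j}=\overline{Z_j}$), and summing over repeated indices $r,s$, $$\Theta(g)(Z_j,Z_{\bar k})=g\big(\mu(Z_s,Z_{\bar r})^{0,1},Z_j\big)\,g\big(\mu(Z_{\bar s},Z_r)^{1,0},Z_{\bar k}\big)+\tfrac12\,g\big(\mu(Z_{\bar s},Z_{\bar r}),Z_j\big)\,g\big(\mu(Z_s,Z_r),Z_{\bar k}\big).$$
   Context: $g$, $J$, $\mu$ are extended complex (bi)linearly to $\mathfrak g\otimes\mathbb C=\mathfrak g^{1,0}\oplus\mathfrak g^{0,1}$, and $X^{1,0},X^{0,1}$ denote the components of $X$. For the Hermitian metric $g$ with Chern connection $\nabla$ (the unique connection preserving $g$ and $J$ whose torsion has vanishing $(1,1)$-part), curvature $\Omega$ and torsion $T$ with $T_{js\bar p}=g_{l\bar p}T^l_{js}$, set $S(g)_{j\bar k}=g^{\bar rs}\Omega_{s\bar rj\bar k}$, $Q^2(g)_{j\bar k}=g^{\bar pq}g^{\bar rs}T_{sq\bar k}T_{\overline{rp}j}$ and $\Theta(g)=S(g)+\frac12 Q^2(g)$. *)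

theory Defs
  imports "HOL-Analysis.Analysis"
begin

text \<open>The real Lie algebra of the Lie group is modelled as real^'m (any finite-dimensional
real vector space); left-invariant objects are identified with their values on the Lie algebra.
The complexification is complex^'m, and all real (bi)linear data are extended complex
(bi)linearly via the standard basis.\<close>

definition cplx :: "real^'m \<Rightarrow> complex^'m" where
  "cplx v = (\<chi> i. complex_of_real (v $ i))"

definition conjv :: "complex^'m \<Rightarrow> complex^'m" where
  "conjv z = (\<chi> i. cnj (z $ i))"

definition ext1 :: "(real^'m \<Rightarrow> real^'m) \<Rightarrow> complex^'m \<Rightarrow> complex^'m" where
  "ext1 L z = (\<Sum>i\<in>UNIV. (z $ i) *s cplx (L (axis i 1)))"

definition ext2 :: "(real^'m \<Rightarrow> real^'m \<Rightarrow> real^'m) \<Rightarrow> complex^'m \<Rightarrow> complex^'m \<Rightarrow> complex^'m" where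
  "ext2 B z w = (\<Sum>i\<in>UNIV. \<Sum>j\<in>UNIV. (z $ i * w $ j) *s cplx (B (axis i 1) (axis j 1)))"

definition extf :: "(real^'m \<Rightarrow> real^'m \<Rightarrow> real) \<Rightarrow> complex^'m \<Rightarrow> complex^'m \<Rightarrow> complex" where
  "extf F z w = (\<Sum>i\<in>UNIV. \<Sum>j\<in>UNIV. z $ i * w $ j * complex_of_real (F (axis i 1) (axis j 1)))"

definition p10 :: "(real^'m \<Rightarrow> real^'m) \<Rightarrow> complex^'m \<Rightarrow> complex^'m" where
  "p10 J z = (1/2 :: complex) *s (z - \<i> *s ext1 J z)"

definition p01 :: "(real^'m \<Rightarrow> real^'m) \<Rightarrow> complex^'m \<Rightarrow> complex^'m" where
  "p01 J z = (1/2 :: complex) *s (z + \<i> *s ext1 J z)"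

definition lie_algebra :: "(real^'m \<Rightarrow> real^'m \<Rightarrow> real^'m) \<Rightarrow> bool" where
  "lie_algebra mu \<longleftrightarrow> bilinear mu \<and> (\<forall>X. mu X X = 0) \<and>
     (\<forall>X Y Z. mu X (mu Y Z) + mu Y (mu Z X) + mu Z (mu X Y) = 0)"

definition two_step_nilpotent :: "(real^'m \<Rightarrow> real^'m \<Rightarrow> real^'m) \<Rightarrow> bool" where
  "two_step_nilpotent mu \<longleftrightarrow> (\<forall>X Y Z. mu (mu X Y) Z = 0) \<and> (\<exists>X Y. mu X Y \<noteq> 0)"

definition complex_structure :: "(real^'m \<Rightarrow> real^'m \<Rightarrow> real^'m) \<Rightarrow> (real^'m \<Rightarrow> real^'m) \<Rightarrow> bool" where
  "complex_structure mu J \<longleftrightarrow> linear J \<and> (\<forall>X. J (J X) = - X) \<and>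
     (\<forall>X Y. mu (J X) (J Y) - J (mu (J X) Y) - J (mu X (J Y)) - mu X Y = 0)"

definition hermitian_metric :: "(real^'m \<Rightarrow> real^'m) \<Rightarrow> (real^'m \<Rightarrow> real^'m \<Rightarrow> real) \<Rightarrow> bool" where
  "hermitian_metric J g \<longleftrightarrow> bilinear g \<and> (\<forall>X Y. g X Y = g Y X) \<and>
     (\<forall>X. X \<noteq> 0 \<longrightarrow> g X X > 0) \<and> (\<forall>X Y. g (J X) (J Y) = g X Y)"

text \<open>Complexified torsion and curvature of a left-invariant connection nab (nab X Y = \<nabla>_X Y
for left-invariant fields).\<close>
definition torsC where
  "torsC mu nab X Y = ext2 nab X Y - ext2 nab Y X - ext2 mu X Y"

definition curvC where
  "curvC mu nab X Y W = ext2 nab X (ext2 nab Y W) - ext2 nab Y (ext2 nab X W) - ext2 nab (ext2 mu X Y) W"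

definition chern_connection ::
  "(real^'m \<Rightarrow> real^'m \<Rightarrow> real^'m) \<Rightarrow> (real^'m \<Rightarrow> real^'m) \<Rightarrow> (real^'m \<Rightarrow> real^'m \<Rightarrow> real)
    \<Rightarrow> (real^'m \<Rightarrow> real^'m \<Rightarrow> real^'m) \<Rightarrow> bool" where
  "chern_connection mu J g nab \<longleftrightarrow> bilinear nab \<and>
     (\<forall>X Y W. g (nab X Y) W + g Y (nab X W) = 0) \<and>
     (\<forall>X Y. nab X (J Y) = J (nab X Y)) \<and>
     (\<forall>z w. torsC mu nab (p10 J z) (p01 J w) = 0)"

definition unitary_frame :: "(real^'m \<Rightarrow> real^'m) \<Rightarrow> (real^'m \<Rightarrow> real^'m \<Rightarrow> real) \<Rightarrow> nat \<Rightarrow> (nat \<Rightarrow> complex^'m) \<Rightarrow> bool" where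
  "unitary_frame J g n Z \<longleftrightarrow> CARD('m) = 2 * n \<and>
     (\<forall>j<n. ext1 J (Z j) = \<i> *s Z j) \<and>
     (\<forall>j<n. \<forall>k<n. extf g (Z j) (conjv (Z k)) = (if j = k then 1 else 0))"

text \<open>Theta(g)(Z_j, Z_{bar k}) = S_{j bar k} + 1/2 Q^2_{j bar k}, written in the unitary frame Z
(where g^{bar r s} = delta_{rs}).\<close>
definition S_chern where
  "S_chern mu g nab n Z j k =
     (\<Sum>r<n. extf g (curvC mu nab (Z r) (conjv (Z r)) (Z j)) (conjv (Z k)))"

definition Q2 where
  "Q2 mu g nab n Z j k =
     (\<Sum>r<n. \<Sum>p<n. extf g (torsC mu nab (Z r) (Z p)) (conjv (Z k)) *
                    extf g (torsC mu nab (conjv (Z r)) (conjv (Z p))) (Z j))"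

definition Theta where
  "Theta mu g nab n Z j k = S_chern mu g nab n Z j k + (1/2) * Q2 mu g nab n Z j k"

end

theory Submission
  imports Defs
begin

abbreviation ee :: "'m::finite \<Rightarrow> real^'m" where "ee i \<equiv> axis i 1"

lemma cplx_comp[simp]: "cplx v $ i = complex_of_real (v $ i)"
  by (simp add: cplx_def)
lemma conjv_comp[simp]: "conjv z $ i = cnj (z $ i)"
  by (simp add: conjv_def)

lemma ext2_comp: "ext2 B X Y $ l = (\<Sum>i\<in>UNIV. \<Sum>j\<in>UNIV. X$i * Y$j * complex_of_real (B (ee i) (ee j) $ l))"
  by (simp add: ext2_def)
lemma ext1_comp: "ext1 L X $ l = (\<Sum>i\<in>UNIV. X$i * complex_of_real (L (ee i) $ l))"
  by (simp add: ext1_def)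

lemma ext2_add1: "ext2 B (X + X') Y = ext2 B X Y + ext2 B X' Y"
  by (simp add: vec_eq_iff ext2_comp algebra_simps sum.distrib)
lemma ext2_add2: "ext2 B X (Y + Y') = ext2 B X Y + ext2 B X Y'"
  by (simp add: vec_eq_iff ext2_comp algebra_simps sum.distrib)
lemma ext2_smult1: "ext2 B (a *s X) Y = a *s ext2 B X Y"
  by (simp add: vec_eq_iff ext2_comp sum_distrib_left mult.assoc)
lemma ext2_smult2: "ext2 B X (a *s Y) = a *s ext2 B X Y"
  by (simp add: vec_eq_iff ext2_comp sum_distrib_left mult.assoc mult.left_commute)
lemma ext1_add: "ext1 L (X + X') = ext1 L X + ext1 L X'"
  by (simp add: vec_eq_iff ext1_comp algebra_simps sum.distrib)
lemma ext1_smult: "ext1 L (a *s X) = a *s ext1 L X"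
  by (simp add: vec_eq_iff ext1_comp sum_distrib_left mult.assoc)
lemma extf_add1: "extf F (X + X') Y = extf F X Y + extf F X' Y"
  by (simp add: extf_def algebra_simps sum.distrib)
lemma extf_add2: "extf F X (Y + Y') = extf F X Y + extf F X Y'"
  by (simp add: extf_def algebra_simps sum.distrib)
lemma extf_smult1: "extf F (a *s X) Y = a * extf F X Y"
  by (simp add: extf_def sum_distrib_left mult.assoc)
lemma extf_smult2: "extf F X (a *s Y) = a * extf F X Y"
  by (simp add: extf_def sum_distrib_left mult.assoc mult.left_commute)
lemma conjv_add: "conjv (X + Y) = conjv X + conjv Y"
  by (simp add: vec_eq_iff)
lemma conjv_smult: "conjv (a *s X) = cnj a *s conjv X"
  by (simp add: vec_eq_iff)
lemma conjv_conjv[simp]: "conjv (conjv X) = X"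
  by (simp add: vec_eq_iff)
lemma conjv_cplx[simp]: "conjv (cplx x) = cplx x"
  by (simp add: vec_eq_iff)

lemma cplx_expand: "X = (\<Sum>i\<in>UNIV. X$i *s cplx (ee i))"
proof -
  have e: "X$i * complex_of_real (if l = i then 1 else 0) = (if l = i then X$i else 0)" for i l
    by simp
  show ?thesis by (simp add: vec_eq_iff axis_def e)
qed

lemma lift_eq_vec:
  fixes f h :: "complex^'m \<Rightarrow> complex^'n"
  assumes "\<And>X X'. f (X+X') = f X + f X'" "\<And>a X. f (a *s X) = a *s f X"
    "\<And>X X'. h (X+X') = h X + h X'" "\<And>a X. h (a *s X) = a *s h X"
    "\<And>x. f (cplx x) = h (cplx x)"
  shows "f X = h X"
proof -
  have s: "k (sum u S) = (\<Sum>i\<in>S. k (u i))" if "\<And>X X'. k (X+X') = k X + k X'" "\<And>a X. k (a *s X) = a *s k X"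
    for k :: "complex^'m \<Rightarrow> complex^'n" and u :: "'m \<Rightarrow> complex^'m" and S
  proof -
    have "k 0 = 0" using that(2)[of 0 0] by simp
    then show ?thesis by (induction S rule: infinite_finite_induct) (simp_all add: that(1))
  qed
  have "f X = f (\<Sum>i\<in>UNIV. X$i *s cplx (ee i))" by (subst cplx_expand, rule refl)
  also have "\<dots> = (\<Sum>i\<in>UNIV. X$i *s f (cplx (ee i)))" by (simp add: s assms)
  also have "\<dots> = (\<Sum>i\<in>UNIV. X$i *s h (cplx (ee i)))" by (simp add: assms)
  also have "\<dots> = h (\<Sum>i\<in>UNIV. X$i *s cplx (ee i))" by (simp add: s assms)
  also have "\<dots> = h X" by (subst (2) cplx_expand, rule refl)
  finally show ?thesis .
qed

lemma lift_eq_sc: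
  fixes f h :: "complex^'m \<Rightarrow> complex"
  assumes "\<And>X X'. f (X+X') = f X + f X'" "\<And>a X. f (a *s X) = a * f X"
    "\<And>X X'. h (X+X') = h X + h X'" "\<And>a X. h (a *s X) = a * h X"
    "\<And>x. f (cplx x) = h (cplx x)"
  shows "f X = h X"
proof -
  have s: "k (sum u S) = (\<Sum>i\<in>S. k (u i))" if "\<And>X X'. k (X+X') = k X + k X'" "\<And>a X. k (a *s X) = a * k X"
    for k :: "complex^'m \<Rightarrow> complex" and u :: "'m \<Rightarrow> complex^'m" and S
  proof -
    have "k 0 = 0" using that(2)[of 0 0] by simp
    then show ?thesis by (induction S rule: infinite_finite_induct) (simp_all add: that(1))
  qed
  have "f X = f (\<Sum>i\<in>UNIV. X$i *s cplx (ee i))" by (subst cplx_expand, rule refl)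
  also have "\<dots> = (\<Sum>i\<in>UNIV. X$i * f (cplx (ee i)))" by (simp add: s assms)
  also have "\<dots> = (\<Sum>i\<in>UNIV. X$i * h (cplx (ee i)))" by (simp add: assms)
  also have "\<dots> = h (\<Sum>i\<in>UNIV. X$i *s cplx (ee i))" by (simp add: s assms)
  also have "\<dots> = h X" by (subst (2) cplx_expand, rule refl)
  finally show ?thesis .
qed

lemma real_expand: "x = (\<Sum>i\<in>UNIV. x$i *\<^sub>R ee i)"
  using basis_expansion[of x] by (simp add: scalar_mult_eq_scaleR)

lemma bilin_expand:
  assumes "bilinear B"
  shows "B x y = (\<Sum>i\<in>UNIV. \<Sum>j\<in>UNIV. (x$i * y$j) *\<^sub>R B (ee i) (ee j))"
proof -
  from assms have l1: "linear (\<lambda>x. B x y)" for y by (simp add: bilinear_def)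
  from assms have l2: "linear (B x)" for x by (simp add: bilinear_def)
  have "B x y = B (\<Sum>i\<in>UNIV. x$i *\<^sub>R ee i) y" by (subst real_expand, rule refl)
  also have "\<dots> = (\<Sum>i\<in>UNIV. x$i *\<^sub>R B (ee i) y)"
    by (simp only: linear_sum[OF l1[of y]] linear_scale[OF l1[of y]])
  also have "\<dots> = (\<Sum>i\<in>UNIV. x$i *\<^sub>R B (ee i) (\<Sum>j\<in>UNIV. y$j *\<^sub>R ee j))" by (subst real_expand, rule refl)
  also have "\<dots> = (\<Sum>i\<in>UNIV. \<Sum>j\<in>UNIV. (x$i * y$j) *\<^sub>R B (ee i) (ee j))"
    by (simp only: linear_sum[OF l2] linear_scale[OF l2] scaleR_sum_right scaleR_scaleR)
  finally show ?thesis .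
qed

lemma lin_expand:
  assumes "linear L"
  shows "L x = (\<Sum>i\<in>UNIV. x$i *\<^sub>R L (ee i))"
proof -
  have "L x = L (\<Sum>i\<in>UNIV. x$i *\<^sub>R ee i)" by (subst real_expand, rule refl)
  also have "\<dots> = (\<Sum>i\<in>UNIV. x$i *\<^sub>R L (ee i))"
    by (simp only: linear_sum[OF assms] linear_scale[OF assms])
  finally show ?thesis .
qed

lemma ext2_cplx: "bilinear B \<Longrightarrow> ext2 B (cplx x) (cplx y) = cplx (B x y)"
  by (subst bilin_expand[of B x y]) (simp_all add: vec_eq_iff ext2_comp)
lemma ext1_cplx: "linear L \<Longrightarrow> ext1 L (cplx x) = cplx (L x)"
  by (subst lin_expand[of L x]) (simp_all add: vec_eq_iff ext1_comp)
lemma extf_cplx: "bilinear F \<Longrightarrow> extf F (cplx x) (cplx y) = complex_of_real (F x y)"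
  by (subst bilin_expand[of F x y]) (simp_all add: extf_def)


lemma cplx_add: "cplx (x + y) = cplx x + cplx y" by (simp add: vec_eq_iff)
lemma cplx_neg: "cplx (- x) = - cplx x" by (simp add: vec_eq_iff)
lemma cplx_zero[simp]: "cplx 0 = 0" by (simp add: vec_eq_iff)

lemma ext2_diff1: "ext2 B (X - X') Y = ext2 B X Y - ext2 B X' Y"
  by (simp add: vec_eq_iff ext2_comp algebra_simps sum_subtractf)
lemma ext2_diff2: "ext2 B X (Y - Y') = ext2 B X Y - ext2 B X Y'"
  by (simp add: vec_eq_iff ext2_comp algebra_simps sum_subtractf)
lemma ext2_neg1: "ext2 B (- X) Y = - ext2 B X Y"
  by (simp add: vec_eq_iff ext2_comp sum_negf)
lemma ext2_neg2: "ext2 B X (- Y) = - ext2 B X Y"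
  by (simp add: vec_eq_iff ext2_comp sum_negf)
lemma ext2_zero1[simp]: "ext2 B 0 Y = 0"
  by (simp add: vec_eq_iff ext2_comp)
lemma ext2_zero2[simp]: "ext2 B X 0 = 0"
  by (simp add: vec_eq_iff ext2_comp)
lemma ext1_diff: "ext1 L (X - X') = ext1 L X - ext1 L X'"
  by (simp add: vec_eq_iff ext1_comp algebra_simps sum_subtractf)
lemma ext1_neg: "ext1 L (- X) = - ext1 L X"
  by (simp add: vec_eq_iff ext1_comp sum_negf)
lemma ext1_zero[simp]: "ext1 L 0 = 0"
  by (simp add: vec_eq_iff ext1_comp)
lemma extf_diff1: "extf F (X - X') Y = extf F X Y - extf F X' Y"
  by (simp add: extf_def algebra_simps sum_subtractf)
lemma extf_diff2: "extf F X (Y - Y') = extf F X Y - extf F X Y'"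
  by (simp add: extf_def algebra_simps sum_subtractf)
lemma extf_neg1: "extf F (- X) Y = - extf F X Y"
  by (simp add: extf_def sum_negf)
lemma extf_neg2: "extf F X (- Y) = - extf F X Y"
  by (simp add: extf_def sum_negf)
lemma extf_zero1[simp]: "extf F 0 Y = 0"
  by (simp add: extf_def)
lemma extf_zero2[simp]: "extf F X 0 = 0"
  by (simp add: extf_def)
lemma conjv_diff: "conjv (X - Y) = conjv X - conjv Y"
  by (simp add: vec_eq_iff)
lemma conjv_neg: "conjv (- X) = - conjv X"
  by (simp add: vec_eq_iff)
lemma conjv_zero[simp]: "conjv 0 = 0"
  by (simp add: vec_eq_iff)
lemma conjv_ext2: "conjv (ext2 B X Y) = ext2 B (conjv X) (conjv Y)"
  by (simp add: vec_eq_iff ext2_comp)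
lemma conjv_ext1: "conjv (ext1 L X) = ext1 L (conjv X)"
  by (simp add: vec_eq_iff ext1_comp)
lemma cnj_extf: "cnj (extf F X Y) = extf F (conjv X) (conjv Y)"
  by (simp add: extf_def)

lemma ext2_sum1: "ext2 B (\<Sum>i\<in>S. f i) Y = (\<Sum>i\<in>S. ext2 B (f i) Y)"
  by (induction S rule: infinite_finite_induct) (simp_all add: ext2_add1)
lemma ext2_sum2: "ext2 B X (\<Sum>i\<in>S. f i) = (\<Sum>i\<in>S. ext2 B X (f i))"
  by (induction S rule: infinite_finite_induct) (simp_all add: ext2_add2)
lemma extf_sum1: "extf F (\<Sum>i\<in>S. f i) Y = (\<Sum>i\<in>S. extf F (f i) Y)"
  by (induction S rule: infinite_finite_induct) (simp_all add: extf_add1)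
lemma extf_sum2: "extf F X (\<Sum>i\<in>S. f i) = (\<Sum>i\<in>S. extf F X (f i))"
  by (induction S rule: infinite_finite_induct) (simp_all add: extf_add2)
lemma ext1_sum: "ext1 L (\<Sum>i\<in>S. f i) = (\<Sum>i\<in>S. ext1 L (f i))"
  by (induction S rule: infinite_finite_induct) (simp_all add: ext1_add)
lemma conjv_sum: "conjv (\<Sum>i\<in>S. f i) = (\<Sum>i\<in>S. conjv (f i))"
  by (simp add: vec_eq_iff)
lemma smult_sum: "(a::complex) *s (\<Sum>i\<in>S. f i) = (\<Sum>i\<in>S. a *s (f i :: complex^'m))"
  by (induction S rule: infinite_finite_induct) (simp_all add: vector_add_ldistrib)
lemma scaleR_s: "r *\<^sub>R (v::complex^'m) = complex_of_real r *s v"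
proof -
  have e: "r *\<^sub>R (z::complex) = complex_of_real r * z" for z by (simp add: scaleR_conv_of_real)
  show ?thesis by (simp add: vec_eq_iff e)
qed

lemmas LIN = ext2_add1 ext2_add2 ext2_smult1 ext2_smult2 ext1_add ext1_smult extf_add1 extf_add2
  extf_smult1 extf_smult2 conjv_add conjv_smult vector_add_ldistrib vector_smult_assoc vector_smult_rneg
  distrib_left ext2_diff1 ext2_diff2 ext2_neg1 ext2_neg2 ext1_diff ext1_neg extf_diff1 extf_diff2
  extf_neg1 extf_neg2 conjv_diff conjv_neg vector_ssub_ldistrib

locale hctx =
  fixes mu :: "real^'m \<Rightarrow> real^'m \<Rightarrow> real^'m"
    and J :: "real^'m \<Rightarrow> real^'m"
    and g :: "real^'m \<Rightarrow> real^'m \<Rightarrow> real"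
    and nab :: "real^'m \<Rightarrow> real^'m \<Rightarrow> real^'m"
    and n :: nat and Z :: "nat \<Rightarrow> complex^'m"
  assumes lie: "lie_algebra mu"
    and nil: "\<forall>X Y W. mu (mu X Y) W = 0"
    and cs: "complex_structure mu J"
    and hm: "hermitian_metric J g"
    and cen: "\<forall>X Y W. mu (J (mu X Y)) W = 0"
    and ch: "chern_connection mu J g nab"
    and uf: "unitary_frame J g n Z"
begin

lemma mu_bil: "bilinear mu" using lie by (simp add: lie_algebra_def)
lemma J_lin: "linear J" using cs by (simp add: complex_structure_def)
lemma JJ: "J (J x) = - x" using cs by (simp add: complex_structure_def)
lemma g_bil: "bilinear g" using hm by (simp add: hermitian_metric_def)
lemma g_sym: "g x y = g y x" using hm by (simp add: hermitian_metric_def)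
lemma g_J: "g (J x) (J y) = g x y" using hm by (simp add: hermitian_metric_def)
lemma nab_bil: "bilinear nab" using ch by (simp add: chern_connection_def)
lemma nab_met: "g (nab x y) w + g y (nab x w) = 0" using ch by (simp add: chern_connection_def)
lemma nab_J: "nab x (J y) = J (nab x y)" using ch by (simp add: chern_connection_def)
lemma tors: "torsC mu nab (p10 J z) (p01 J w) = 0" using ch by (simp add: chern_connection_def)
lemma mu_anti: "mu x y = - mu y x"
proof -
  have l1: "linear (\<lambda>x. mu x y)" for y using mu_bil by (simp add: bilinear_def)
  have l2: "linear (mu x)" for x using mu_bil by (simp add: bilinear_def)
  have z: "mu x x = 0" for x using lie by (simp add: lie_algebra_def)
  have "0 = mu (x + y) (x + y)" using z by simp
  also have "\<dots> = mu x x + mu x y + mu y x + mu y y"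
    by (simp add: linear_add[OF l1] linear_add[OF l2])
  finally show ?thesis using z by (simp add: eq_neg_iff_add_eq_0)
qed

lemma brC_anti: "ext2 mu X Y = - ext2 mu Y X"
proof -
  have r: "ext2 mu (cplx x) Y = - ext2 mu Y (cplx x)" for x
    by (rule lift_eq_vec[where f="\<lambda>Y. ext2 mu (cplx x) Y" and h="\<lambda>Y. - ext2 mu Y (cplx x)"])
      (simp_all add: LIN ext2_cplx mu_bil cplx_neg[symmetric] mu_anti[of x])
  show ?thesis
    by (rule lift_eq_vec[where f="\<lambda>X. ext2 mu X Y" and h="\<lambda>X. - ext2 mu Y X"]) (simp_all add: LIN r)
qed


lemma JcJc: "ext1 J (ext1 J X) = - X"
  by (rule lift_eq_vec[where f="\<lambda>X. ext1 J (ext1 J X)" and h="\<lambda>X. - X"])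
     (simp_all add: LIN ext1_cplx J_lin JJ cplx_neg)

lemma GJ: "extf g (ext1 J X) (ext1 J Y) = extf g X Y"
proof -
  have r: "extf g (ext1 J (cplx x)) (ext1 J Y) = extf g (cplx x) Y" for x
    by (rule lift_eq_sc[where f="\<lambda>Y. extf g (ext1 J (cplx x)) (ext1 J Y)" and h="\<lambda>Y. extf g (cplx x) Y"])
       (simp_all add: LIN ext1_cplx extf_cplx J_lin g_bil g_J)
  show ?thesis
    by (rule lift_eq_sc[where f="\<lambda>X. extf g (ext1 J X) (ext1 J Y)" and h="\<lambda>X. extf g X Y"])
       (simp_all add: LIN r)
qed

lemma Gsym: "extf g X Y = extf g Y X"
proof -
  have r: "extf g (cplx x) Y = extf g Y (cplx x)" for x
    by (rule lift_eq_sc[where f="\<lambda>Y. extf g (cplx x) Y" and h="\<lambda>Y. extf g Y (cplx x)"])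
       (simp_all add: LIN extf_cplx g_bil g_sym[of x])
  show ?thesis
    by (rule lift_eq_sc[where f="\<lambda>X. extf g X Y" and h="\<lambda>X. extf g Y X"])
       (simp_all add: LIN r)
qed

lemma cen1: "ext2 mu (ext2 mu X Y) W = 0"
proof -
  have r3: "ext2 mu (ext2 mu (cplx x) (cplx y)) (cplx w) = 0" for x y w
    using nil by (simp add: ext2_cplx mu_bil)
  have r2: "ext2 mu (ext2 mu (cplx x) (cplx y)) W = 0" for x y
    by (rule lift_eq_vec[where f="\<lambda>W. ext2 mu (ext2 mu (cplx x) (cplx y)) W" and h="\<lambda>W. 0"])
       (simp_all add: LIN r3)
  have r1: "ext2 mu (ext2 mu (cplx x) Y) W = 0" for x
    by (rule lift_eq_vec[where f="\<lambda>Y. ext2 mu (ext2 mu (cplx x) Y) W" and h="\<lambda>W. 0"])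
       (simp_all add: LIN r2)
  show ?thesis
    by (rule lift_eq_vec[where f="\<lambda>X. ext2 mu (ext2 mu X Y) W" and h="\<lambda>W. 0"])
       (simp_all add: LIN r1)
qed

lemma cen2: "ext2 mu (ext1 J (ext2 mu X Y)) W = 0"
proof -
  have r3: "ext2 mu (ext1 J (ext2 mu (cplx x) (cplx y))) (cplx w) = 0" for x y w
    using cen by (simp add: ext2_cplx ext1_cplx J_lin mu_bil)
  have r2: "ext2 mu (ext1 J (ext2 mu (cplx x) (cplx y))) W = 0" for x y
    by (rule lift_eq_vec[where f="\<lambda>W. ext2 mu (ext1 J (ext2 mu (cplx x) (cplx y))) W" and h="\<lambda>W. 0"])
       (simp_all add: LIN r3)
  have r1: "ext2 mu (ext1 J (ext2 mu (cplx x) Y)) W = 0" for x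
    by (rule lift_eq_vec[where f="\<lambda>Y. ext2 mu (ext1 J (ext2 mu (cplx x) Y)) W" and h="\<lambda>W. 0"])
       (simp_all add: LIN r2)
  show ?thesis
    by (rule lift_eq_vec[where f="\<lambda>X. ext2 mu (ext1 J (ext2 mu X Y)) W" and h="\<lambda>W. 0"])
       (simp_all add: LIN r1)
qed

lemma DJ: "ext2 nab X (ext1 J Y) = ext1 J (ext2 nab X Y)"
proof -
  have r: "ext2 nab (cplx x) (ext1 J Y) = ext1 J (ext2 nab (cplx x) Y)" for x
    by (rule lift_eq_vec[where f="\<lambda>Y. ext2 nab (cplx x) (ext1 J Y)" and h="\<lambda>Y. ext1 J (ext2 nab (cplx x) Y)"])
       (simp_all add: LIN ext1_cplx ext2_cplx J_lin nab_bil nab_J)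
  show ?thesis
    by (rule lift_eq_vec[where f="\<lambda>X. ext2 nab X (ext1 J Y)" and h="\<lambda>X. ext1 J (ext2 nab X Y)"])
       (simp_all add: LIN r)
qed

lemma Dmet: "extf g (ext2 nab X Y) W + extf g Y (ext2 nab X W) = 0"
proof -
  have r3: "extf g (ext2 nab (cplx x) (cplx y)) (cplx w) + extf g (cplx y) (ext2 nab (cplx x) (cplx w)) = 0" for x y w
    using nab_met[of x y w] by (simp add: ext2_cplx extf_cplx nab_bil g_bil flip: of_real_add)
  have r2: "extf g (ext2 nab (cplx x) (cplx y)) W + extf g (cplx y) (ext2 nab (cplx x) W) = 0" for x y
    by (rule lift_eq_sc[where f="\<lambda>W. extf g (ext2 nab (cplx x) (cplx y)) W + extf g (cplx y) (ext2 nab (cplx x) W)" and h="\<lambda>W. 0"])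
       (simp_all add: LIN r3)
  have r1: "extf g (ext2 nab (cplx x) Y) W + extf g Y (ext2 nab (cplx x) W) = 0" for x
    by (rule lift_eq_sc[where f="\<lambda>Y. extf g (ext2 nab (cplx x) Y) W + extf g Y (ext2 nab (cplx x) W)" and h="\<lambda>W. 0"])
       (simp_all add: LIN r2)
  show ?thesis
    by (rule lift_eq_sc[where f="\<lambda>X. extf g (ext2 nab X Y) W + extf g Y (ext2 nab X W)" and h="\<lambda>W. 0"])
       (simp_all add: LIN r1)
qed


lemma P_add: "p10 J (X + Y) = p10 J X + p10 J Y" by (simp add: p10_def vec_eq_iff LIN algebra_simps)
lemma Pb_add: "p01 J (X + Y) = p01 J X + p01 J Y" by (simp add: p01_def vec_eq_iff LIN algebra_simps)
lemma P_diff: "p10 J (X - Y) = p10 J X - p10 J Y" by (simp add: p10_def vec_eq_iff LIN algebra_simps)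
lemma Pb_diff: "p01 J (X - Y) = p01 J X - p01 J Y" by (simp add: p01_def vec_eq_iff LIN algebra_simps)
lemma P_neg: "p10 J (- X) = - p10 J X" by (simp add: p10_def vec_eq_iff LIN algebra_simps)
lemma Pb_neg: "p01 J (- X) = - p01 J X" by (simp add: p01_def vec_eq_iff LIN algebra_simps)
lemma P_smult: "p10 J (a *s X) = a *s p10 J X" by (simp add: p10_def vec_eq_iff LIN algebra_simps)
lemma Pb_smult: "p01 J (a *s X) = a *s p01 J X" by (simp add: p01_def vec_eq_iff LIN algebra_simps)
lemma P_zero[simp]: "p10 J 0 = 0" by (simp add: p10_def vec_eq_iff)
lemma Pb_zero[simp]: "p01 J 0 = 0" by (simp add: p01_def vec_eq_iff)
lemma P_Pb: "p10 J X + p01 J X = X" by (simp add: p10_def p01_def vec_eq_iff algebra_simps)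

lemma JP: "ext1 J (p10 J X) = \<i> *s p10 J X"
proof -
  have "ext1 J (p10 J X) = (1/2) *s (ext1 J X - \<i> *s ext1 J (ext1 J X))"
    by (simp add: p10_def LIN)
  then show ?thesis by (simp add: JcJc p10_def vec_eq_iff algebra_simps)
qed
lemma JPb: "ext1 J (p01 J X) = - \<i> *s p01 J X"
proof -
  have "ext1 J (p01 J X) = (1/2) *s (ext1 J X + \<i> *s ext1 J (ext1 J X))"
    by (simp add: p01_def LIN)
  then show ?thesis by (simp add: JcJc p01_def vec_eq_iff algebra_simps)
qed
lemma P_i: "ext1 J X = \<i> *s X \<Longrightarrow> p10 J X = X \<and> p01 J X = 0"
  by (simp add: p10_def p01_def vec_eq_iff algebra_simps)
lemma P_mi: "ext1 J X = - \<i> *s X \<Longrightarrow> p01 J X = X \<and> p10 J X = 0"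
  by (simp add: p10_def p01_def vec_eq_iff algebra_simps)

lemma G_i: assumes "ext1 J X = \<i> *s X" "ext1 J Y = \<i> *s Y" shows "extf g X Y = 0"
proof -
  have "extf g X Y = extf g (\<i> *s X) (\<i> *s Y)" using GJ[of X Y] assms by simp
  also have "\<dots> = - extf g X Y" by (simp only: extf_smult1 extf_smult2) simp
  finally show ?thesis by simp
qed
lemma G_mi: assumes "ext1 J X = - \<i> *s X" "ext1 J Y = - \<i> *s Y" shows "extf g X Y = 0"
proof -
  have "extf g X Y = extf g ((- \<i>) *s X) ((- \<i>) *s Y)" using GJ[of X Y] assms by simp
  also have "\<dots> = - extf g X Y" by (simp only: extf_smult1 extf_smult2) simp
  finally show ?thesis by simp
qed

lemma cenP1: "ext2 mu (p10 J (ext2 mu X Y)) W = 0"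
  by (simp add: p10_def LIN cen1 cen2)
lemma cenPb1: "ext2 mu (p01 J (ext2 mu X Y)) W = 0"
  by (simp add: p01_def LIN cen1 cen2)
lemma cenP2: "ext2 mu W (p10 J (ext2 mu X Y)) = 0"
  using cenP1 brC_anti by (metis neg_equal_0_iff_equal)
lemma cenPb2: "ext2 mu W (p01 J (ext2 mu X Y)) = 0"
  using cenPb1 brC_anti by (metis neg_equal_0_iff_equal)

lemma chern:
  assumes X: "ext1 J X = \<i> *s X" and Y: "ext1 J Y = - \<i> *s Y"
  shows "ext2 nab X Y = p01 J (ext2 mu X Y)" "ext2 nab Y X = p10 J (ext2 mu Y X)"
proof -
  have PX: "p10 J X = X" using P_i[OF X] by simp
  have PY: "p01 J Y = Y" using P_mi[OF Y] by simp
  have t: "ext2 nab X Y - ext2 nab Y X - ext2 mu X Y = 0"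
    using tors[of X Y] unfolding PX PY torsC_def .
  have a: "ext1 J (ext2 nab X Y) = - \<i> *s ext2 nab X Y"
    using DJ[of X Y] unfolding Y ext2_smult2 by simp
  have b: "ext1 J (ext2 nab Y X) = \<i> *s ext2 nab Y X"
    using DJ[of Y X] unfolding X ext2_smult2 by simp
  have "p01 J (ext2 nab X Y - ext2 nab Y X - ext2 mu X Y) = 0" using t by simp
  then show "ext2 nab X Y = p01 J (ext2 mu X Y)"
    unfolding Pb_diff using P_mi[OF a] P_i[OF b] by simp
  have "p10 J (ext2 nab X Y - ext2 nab Y X - ext2 mu X Y) = 0" using t by simp
  then have "- ext2 nab Y X - p10 J (ext2 mu X Y) = 0"
    unfolding P_diff using P_mi[OF a] P_i[OF b] by simp
  then have "ext2 nab Y X = - p10 J (ext2 mu X Y)"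
    by (metis add.inverse_inverse diff_0 diff_minus_eq_add eq_neg_iff_add_eq_0)
  then show "ext2 nab Y X = p10 J (ext2 mu Y X)"
    by (metis P_neg brC_anti)
qed

lemma P_sum: "p10 J (\<Sum>i\<in>S. f i) = (\<Sum>i\<in>S. p10 J (f i))"
  by (induction S rule: infinite_finite_induct) (simp_all add: P_add)
lemma Pb_sum: "p01 J (\<Sum>i\<in>S. f i) = (\<Sum>i\<in>S. p01 J (f i))"
  by (induction S rule: infinite_finite_induct) (simp_all add: Pb_add)

lemma ZJ: "c < n \<Longrightarrow> ext1 J (Z c) = \<i> *s Z c"
  using uf by (simp add: unitary_frame_def)
lemma ZbJ: "c < n \<Longrightarrow> ext1 J (conjv (Z c)) = - \<i> *s conjv (Z c)"
proof -
  assume c: "c < n"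
  have "ext1 J (conjv (Z c)) = conjv (ext1 J (Z c))" by (simp add: conjv_ext1)
  also have "\<dots> = conjv (\<i> *s Z c)" using ZJ[OF c] by simp
  also have "\<dots> = - \<i> *s conjv (Z c)" by (simp add: vec_eq_iff)
  finally show ?thesis .
qed
lemma orth: "a < n \<Longrightarrow> b < n \<Longrightarrow> extf g (Z a) (conjv (Z b)) = (if a = b then 1 else 0)"
  using uf by (simp add: unitary_frame_def)
lemma orth': "a < n \<Longrightarrow> b < n \<Longrightarrow> extf g (conjv (Z a)) (Z b) = (if a = b then 1 else 0)"
  using orth[of b a] Gsym by auto
lemma orth0: "a < n \<Longrightarrow> b < n \<Longrightarrow> extf g (Z a) (Z b) = 0"
  using G_i ZJ by blast
lemma orth0': "a < n \<Longrightarrow> b < n \<Longrightarrow> extf g (conjv (Z a)) (conjv (Z b)) = 0"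
  using G_mi ZbJ by blast
lemma card_m: "CARD('m) = 2 * n"
  using uf by (simp add: unitary_frame_def)

definition FF :: "nat \<times> nat \<Rightarrow> complex^'m" where
  "FF p = (if snd p = 0 then Z (fst p) else if snd p = 1 then \<i> *s Z (fst p)
           else if snd p = 2 then conjv (Z (fst p)) else \<i> *s conjv (Z (fst p)))"
definition psi :: "nat \<times> nat \<Rightarrow> complex^'m \<Rightarrow> real" where
  "psi p w = (if snd p = 0 then Re (extf g w (conjv (Z (fst p))))
     else if snd p = 1 then Im (extf g w (conjv (Z (fst p))))
     else if snd p = 2 then Re (extf g w (Z (fst p))) else Im (extf g w (Z (fst p))))"

lemma psi_FF:
  assumes "a \<in> {..<n} \<times> {..<4}" "b \<in> {..<n} \<times> {..<4}"
  shows "psi a (FF b) = (if a = b then 1 else 0)"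
proof -
  obtain c t d s where ab: "a = (c, t)" "b = (d, s)" by (cases a, cases b) auto
  have h: "c < n" "d < n" "t < 4" "s < 4" using assms ab by auto
  have t4: "t = 0 \<or> t = 1 \<or> t = 2 \<or> t = 3" using h by auto
  have s4: "s = 0 \<or> s = 1 \<or> s = 2 \<or> s = 3" using h by auto
  show ?thesis using t4 s4 h
    by (auto simp: ab psi_def FF_def extf_smult1 orth orth' orth0 orth0')
qed

lemma psi_lin: "psi a (\<Sum>v\<in>T. u v *\<^sub>R v) = (\<Sum>v\<in>T. u v * psi a v)"
  by (simp add: psi_def scaleR_s extf_sum1 extf_smult1 Re_sum Im_sum)

lemma FF_inj: "inj_on FF ({..<n} \<times> {..<4})"
proof (rule inj_onI)
  fix a b assume a: "a \<in> {..<n} \<times> {..<4}" and b: "b \<in> {..<n} \<times> {..<4}" and e: "FF a = FF b"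
  have "psi a (FF a) = psi a (FF b)" using e by simp
  then show "a = b" using psi_FF[OF a a] psi_FF[OF a b] by (auto split: if_splits)
qed

lemma FF_indep: "independent (FF ` ({..<n} \<times> {..<4}))"
proof (rule independent_if_scalars_zero)
  show "finite (FF ` ({..<n} \<times> {..<4}))" by simp
next
  fix f x assume s: "(\<Sum>x\<in>FF ` ({..<n} \<times> {..<4}). f x *\<^sub>R x) = 0"
    and x: "x \<in> FF ` ({..<n} \<times> {..<4})"
  then obtain a where a: "a \<in> {..<n} \<times> {..<4}" "x = FF a" by auto
  have "0 = psi a (\<Sum>x\<in>FF ` ({..<n} \<times> {..<4}). f x *\<^sub>R x)" using s
    by (simp add: psi_def)
  also have "\<dots> = (\<Sum>y\<in>FF ` ({..<n} \<times> {..<4}). f y * psi a y)" by (rule psi_lin)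
  also have "\<dots> = (\<Sum>y\<in>FF ` ({..<n} \<times> {..<4}). (if y = x then f y else 0))"
  proof (rule sum.cong)
    fix y assume "y \<in> FF ` ({..<n} \<times> {..<4})"
    then obtain b where b: "b \<in> {..<n} \<times> {..<4}" "y = FF b" by auto
    have "(y = x) = (b = a)" using FF_inj a b by (auto simp: inj_on_def)
    then show "f y * psi a y = (if y = x then f y else 0)"
      using psi_FF[OF a(1) b(1)] b by auto
  qed simp
  also have "\<dots> = f x" using x by (simp add: sum.delta)
  finally show "f x = 0" by simp
qed

lemma FF_span: "span (FF ` ({..<n} \<times> {..<4})) = UNIV"
proof -
  have "card (FF ` ({..<n} \<times> {..<4})) = 4 * n"
    using card_image[OF FF_inj] by simp
  also have "\<dots> = dim (UNIV :: (complex^'m) set)" using card_m by simp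
  finally have "independent (FF ` ({..<n} \<times> {..<4})) = (UNIV \<subseteq> span (FF ` ({..<n} \<times> {..<4})))"
    by (intro card_eq_dim) auto
  then show ?thesis using FF_indep by auto
qed

definition QQ :: "complex^'m \<Rightarrow> complex^'m" where
  "QQ X = X - (\<Sum>c<n. extf g X (conjv (Z c)) *s Z c) - (\<Sum>c<n. extf g X (Z c) *s conjv (Z c))"

lemma QQ_add: "QQ (X + Y) = QQ X + QQ Y"
  by (simp add: QQ_def extf_add1 vector_sadd_rdistrib sum.distrib algebra_simps)
lemma QQ_smult: "QQ (a *s X) = a *s QQ X"
  by (simp add: QQ_def extf_smult1 smult_sum vector_smult_assoc vector_ssub_ldistrib)
lemma QQ_lin: "linear QQ"
  by (simp add: linear_iff QQ_add scaleR_s QQ_smult)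

lemma QQ_Z: "d < n \<Longrightarrow> QQ (Z d) = 0"
proof -
  assume d: "d < n"
  have a: "(\<Sum>c<n. extf g (Z d) (conjv (Z c)) *s Z c) = (\<Sum>c<n. if d = c then Z c else 0)"
    by (rule sum.cong) (auto simp: orth d)
  have b: "(\<Sum>c<n. extf g (Z d) (Z c) *s conjv (Z c)) = 0"
    by (rule sum.neutral) (auto simp: orth0 d)
  show ?thesis using d by (simp add: QQ_def a b)
qed
lemma QQ_Zb: "d < n \<Longrightarrow> QQ (conjv (Z d)) = 0"
proof -
  assume d: "d < n"
  have a: "(\<Sum>c<n. extf g (conjv (Z d)) (Z c) *s conjv (Z c)) = (\<Sum>c<n. if d = c then conjv (Z c) else 0)"
    by (rule sum.cong) (auto simp: orth' d)
  have b: "(\<Sum>c<n. extf g (conjv (Z d)) (conjv (Z c)) *s Z c) = 0"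
    by (rule sum.neutral) (auto simp: orth0' d)
  show ?thesis using d by (simp add: QQ_def a b)
qed

lemma QQ_zero: "QQ X = 0"
proof (rule real_vector.linear_eq_0_on_span[OF QQ_lin])
  show "X \<in> span (FF ` ({..<n} \<times> {..<4}))" using FF_span by simp
next
  fix x assume "x \<in> FF ` ({..<n} \<times> {..<4})"
  then obtain d t where "d < n" "x = FF (d, t)" by auto
  then show "QQ x = 0" by (auto simp: FF_def QQ_smult QQ_Z QQ_Zb)
qed

lemma complete: "X = (\<Sum>c<n. extf g X (conjv (Z c)) *s Z c) + (\<Sum>c<n. extf g X (Z c) *s conjv (Z c))"
  using QQ_zero[of X] by (simp add: QQ_def algebra_simps)

abbreviation "GG \<equiv> extf g"
abbreviation "BR \<equiv> ext2 mu"
abbreviation "DD \<equiv> ext2 nab"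
abbreviation "PP \<equiv> p10 J"
abbreviation "PB \<equiv> p01 J"
abbreviation "zb c \<equiv> conjv (Z c)"

lemma PPPP: "PP (PP X) = PP X" using P_i[OF JP] by simp
lemma PBPB: "PB (PB X) = PB X" using P_mi[OF JPb] by simp

lemma resPb: "(\<Sum>p<n. GG (Z p) X *s zb p) = PB X"
proof -
  have a: "GG (PB X) (zb c) = 0" if "c < n" for c using G_mi[OF JPb ZbJ[OF that]] .
  have b: "GG (PB X) (Z c) = GG X (Z c)" if "c < n" for c
  proof -
    have "GG (PB X) (Z c) = GG (X - PP X) (Z c)" using P_Pb[of X] by (metis add_diff_cancel_left')
    also have "\<dots> = GG X (Z c)" using G_i[OF JP ZJ[OF that]] by (simp add: extf_diff1)
    finally show ?thesis .
  qed
  have "PB X = (\<Sum>c<n. GG (PB X) (zb c) *s Z c) + (\<Sum>c<n. GG (PB X) (Z c) *s zb c)"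
    by (rule complete)
  also have "\<dots> = (\<Sum>c<n. GG X (Z c) *s zb c)" by (simp add: a b)
  finally show ?thesis by (simp add: Gsym[of X])
qed

lemma resP: "(\<Sum>p<n. GG (zb p) X *s Z p) = PP X"
proof -
  have a: "GG (PP X) (Z c) = 0" if "c < n" for c using G_i[OF JP ZJ[OF that]] .
  have b: "GG (PP X) (zb c) = GG X (zb c)" if "c < n" for c
  proof -
    have "GG (PP X) (zb c) = GG (X - PB X) (zb c)" using P_Pb[of X] by (metis add_diff_cancel_right')
    also have "\<dots> = GG X (zb c)" using G_mi[OF JPb ZbJ[OF that]] by (simp add: extf_diff1)
    finally show ?thesis .
  qed
  have "PP X = (\<Sum>c<n. GG (PP X) (zb c) *s Z c) + (\<Sum>c<n. GG (PP X) (Z c) *s zb c)"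
    by (rule complete)
  also have "\<dots> = (\<Sum>c<n. GG X (zb c) *s Z c)" by (simp add: a b)
  finally show ?thesis by (simp add: Gsym[of X])
qed

lemma sum_lin:
  fixes f :: "complex^'m \<Rightarrow> complex"
  assumes "\<And>X Y. f (X+Y) = f X + f Y" "\<And>a X. f (a *s X) = a * f X"
  shows "f (\<Sum>p\<in>S. c p *s v p) = (\<Sum>p\<in>S. c p * f (v p))"
proof -
  have "f 0 = 0" using assms(2)[of 0 0] by simp
  then show ?thesis by (induction S rule: infinite_finite_induct) (simp_all add: assms)
qed

lemma resPb_lin:
  fixes f :: "complex^'m \<Rightarrow> complex"
  assumes "\<And>X Y. f (X+Y) = f X + f Y" "\<And>a X. f (a *s X) = a * f X"
  shows "(\<Sum>p<n. GG (Z p) X * f (zb p)) = f (PB X)"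
  using sum_lin[OF assms, of "\<lambda>p. GG (Z p) X" zb "{..<n}"] by (simp add: resPb)

lemma resP_lin:
  fixes f :: "complex^'m \<Rightarrow> complex"
  assumes "\<And>X Y. f (X+Y) = f X + f Y" "\<And>a X. f (a *s X) = a * f X"
  shows "(\<Sum>p<n. GG (zb p) X * f (Z p)) = f (PP X)"
  using sum_lin[OF assms, of "\<lambda>p. GG (zb p) X" Z "{..<n}"] by (simp add: resP)

lemma met': "GG (DD X Y) W = - GG Y (DD X W)"
  using Dmet[of X Y W] by (simp add: eq_neg_iff_add_eq_0)

lemma D1: "c < n \<Longrightarrow> d < n \<Longrightarrow> DD (Z c) (zb d) = PB (BR (Z c) (zb d))"
  using chern(1)[OF ZJ ZbJ] by blast
lemma D2: "c < n \<Longrightarrow> d < n \<Longrightarrow> DD (zb d) (Z c) = PP (BR (zb d) (Z c))"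
  using chern(2)[OF ZJ ZbJ] by blast

lemma S_r:
  assumes j: "j < n" and k: "k < n" and r: "r < n"
  shows "GG (curvC mu nab (Z r) (zb r) (Z j)) (zb k) =
    - GG (PB (BR (Z r) (zb k))) (PP (BR (zb r) (Z j)))
    + (\<Sum>c<n. GG (PB (BR (Z r) (zb c))) (Z j) * GG (PP (BR (zb r) (Z c))) (zb k))"
proof -
  have t1: "GG (DD (Z r) (DD (zb r) (Z j))) (zb k) = - GG (PB (BR (Z r) (zb k))) (PP (BR (zb r) (Z j)))"
    by (simp add: met' D1[OF r k] D2[OF j r] Gsym[of "PP _"])
  define C where "C = DD (Z r) (Z j)"
  have JC: "ext1 J C = \<i> *s C" unfolding C_def by (simp add: DJ[symmetric] ZJ[OF j] ext2_smult2)
  have PC: "PP C = C" using P_i[OF JC] by simp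
  have t2: "GG (DD (zb r) (DD (Z r) (Z j))) (zb k) =
     - (\<Sum>c<n. GG (PB (BR (Z r) (zb c))) (Z j) * GG (PP (BR (zb r) (Z c))) (zb k))"
  proof -
    have "GG (DD (zb r) C) (zb k) = - GG C (DD (zb r) (zb k))" by (rule met')
    also have "GG C (DD (zb r) (zb k)) = GG (PP C) (DD (zb r) (zb k))" by (simp add: PC)
    also have "\<dots> = (\<Sum>c<n. GG (zb c) C * GG (Z c) (DD (zb r) (zb k)))"
      by (rule resP_lin[symmetric]) (simp_all add: LIN)
    also have "\<dots> = (\<Sum>c<n. GG (PB (BR (Z r) (zb c))) (Z j) * GG (PP (BR (zb r) (Z c))) (zb k))"
    proof (rule sum.cong)
      fix c assume "c \<in> {..<n}"
      then have c: "c < n" by simp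
      have a: "GG (zb c) C = - GG (PB (BR (Z r) (zb c))) (Z j)"
        unfolding C_def by (simp add: Gsym[of "zb c"] met' D1[OF r c] Gsym[of "Z j"])
      have b: "GG (Z c) (DD (zb r) (zb k)) = - GG (PP (BR (zb r) (Z c))) (zb k)"
        using met'[of "zb r" "Z c" "zb k"] by (simp add: D2[OF c r])
      show "GG (zb c) C * GG (Z c) (DD (zb r) (zb k)) =
         GG (PB (BR (Z r) (zb c))) (Z j) * GG (PP (BR (zb r) (Z c))) (zb k)"
        by (simp add: a b)
    qed simp
    finally show ?thesis by (simp add: C_def)
  qed
  have t3: "GG (DD (BR (Z r) (zb r)) (Z j)) (zb k) = 0"
  proof -
    define B where "B = BR (Z r) (zb r)"
    have "DD B (Z j) = DD (PP B) (Z j) + DD (PB B) (Z j)"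
      using P_Pb[of B] by (metis ext2_add1)
    moreover have "DD (PB B) (Z j) = 0"
      using chern(2)[OF ZJ[OF j] JPb] by (simp add: B_def cenPb1)
    moreover have "GG (DD (PP B) (Z j)) (zb k) = 0"
      using chern(1)[OF JP ZbJ[OF k]] by (simp add: met' B_def cenP1)
    ultimately show ?thesis by (simp add: B_def extf_add1)
  qed
  show ?thesis
    by (simp add: curvC_def extf_diff1 t1 t2 t3)
qed

lemma main:
  assumes j: "j < n" and k: "k < n"
  shows "Theta mu g nab n Z j k =
    (\<Sum>r<n. \<Sum>s<n.
        extf g (p01 J (ext2 mu (Z s) (conjv (Z r)))) (Z j) *
        extf g (p10 J (ext2 mu (conjv (Z s)) (Z r))) (conjv (Z k))
      + (1/2) * (extf g (ext2 mu (conjv (Z s)) (conjv (Z r))) (Z j) *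
                 extf g (ext2 mu (Z s) (Z r)) (conjv (Z k))))"
proof -
  define A where "A r p = GG (Z p) (PB (BR (Z r) (zb k)))" for r p
  define A' where "A' r p = GG (zb p) (PP (BR (zb r) (Z j)))" for r p
  define B where "B r p = GG (BR (Z r) (Z p)) (zb k)" for r p
  define B' where "B' r p = GG (BR (zb r) (zb p)) (Z j)" for r p
  have T1: "GG (torsC mu nab (Z r) (Z p)) (zb k) = - A r p + A p r - B r p" if "r < n" "p < n" for r p
    by (simp add: torsC_def extf_diff1 met' D1[OF that(1) k] D1[OF that(2) k] A_def B_def)
  have T2: "GG (torsC mu nab (zb r) (zb p)) (Z j) = - A' r p + A' p r - B' r p" if "r < n" "p < n" for r p
    by (simp add: torsC_def extf_diff1 met' D2[OF j that(1)] D2[OF j that(2)] A'_def B'_def)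
  have Q: "Q2 mu g nab n Z j k = (\<Sum>r<n. \<Sum>p<n. (- A r p + A p r - B r p) * (- A' r p + A' p r - B' r p))"
    unfolding Q2_def by (intro sum.cong refl) (simp add: T1 T2)
  have v1: "(\<Sum>p<n. A r p * A' p r) = 0" for r
  proof -
    have "(\<Sum>p<n. A r p * A' p r) = GG (zb r) (PP (BR (PB (PB (BR (Z r) (zb k)))) (Z j)))"
      unfolding A_def A'_def by (rule resPb_lin) (simp_all add: LIN P_add P_smult)
    then show ?thesis by (simp add: PBPB cenPb1)
  qed
  have v2: "(\<Sum>p<n. A r p * B' r p) = 0" for r
  proof -
    have "(\<Sum>p<n. A r p * B' r p) = GG (BR (zb r) (PB (PB (BR (Z r) (zb k))))) (Z j)"
      unfolding A_def B'_def by (rule resPb_lin) (simp_all add: LIN)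
    then show ?thesis by (simp add: PBPB cenPb2)
  qed
  have v3: "(\<Sum>r<n. A p r * A' r p) = 0" for p
  proof -
    have "(\<Sum>r<n. A p r * A' r p) = GG (zb p) (PP (BR (PB (PB (BR (Z p) (zb k)))) (Z j)))"
      unfolding A_def A'_def by (rule resPb_lin) (simp_all add: LIN P_add P_smult)
    then show ?thesis by (simp add: PBPB cenPb1)
  qed
  have v4: "(\<Sum>r<n. A p r * B' r p) = 0" for p
  proof -
    have "(\<Sum>r<n. A p r * B' r p) = GG (BR (PB (PB (BR (Z p) (zb k)))) (zb p)) (Z j)"
      unfolding A_def B'_def by (rule resPb_lin) (simp_all add: LIN)
    then show ?thesis by (simp add: PBPB cenPb1)
  qed
  have v5: "(\<Sum>p<n. B r p * A' r p) = 0" for r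
  proof -
    have "(\<Sum>p<n. A' r p * B r p) = GG (BR (Z r) (PP (PP (BR (zb r) (Z j))))) (zb k)"
      unfolding A'_def B_def by (rule resP_lin) (simp_all add: LIN)
    then show ?thesis by (simp add: PPPP cenP2 mult.commute)
  qed
  have v6: "(\<Sum>r<n. B r p * A' p r) = 0" for p
  proof -
    have "(\<Sum>r<n. A' p r * B r p) = GG (BR (PP (PP (BR (zb p) (Z j)))) (Z p)) (zb k)"
      unfolding A'_def B_def by (rule resP_lin) (simp_all add: LIN)
    then show ?thesis by (simp add: PPPP cenP1 mult.commute)
  qed
  have K: "(\<Sum>p<n. A r p * A' r p) = GG (PB (BR (Z r) (zb k))) (PP (BR (zb r) (Z j)))" for r
  proof -
    have "(\<Sum>p<n. A r p * A' r p) = GG (PB (PB (BR (Z r) (zb k)))) (PP (BR (zb r) (Z j)))"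
      unfolding A_def A'_def by (rule resPb_lin) (simp_all add: LIN)
    then show ?thesis by (simp add: PBPB)
  qed
  define KK where "KK = (\<Sum>r<n. GG (PB (BR (Z r) (zb k))) (PP (BR (zb r) (Z j))))"
  have e1: "(\<Sum>r<n. \<Sum>p<n. A r p * A' r p) = KK" by (simp add: K KK_def)
  have e2: "(\<Sum>r<n. \<Sum>p<n. A p r * A' p r) = KK" using e1 by (subst sum.swap) simp
  have e3: "(\<Sum>r<n. \<Sum>p<n. A r p * A' p r) = 0" by (simp add: v1)
  have e4: "(\<Sum>r<n. \<Sum>p<n. A r p * B' r p) = 0" by (simp add: v2)
  have e5: "(\<Sum>r<n. \<Sum>p<n. A p r * A' r p) = 0" by (subst sum.swap) (simp add: v3)
  have e6: "(\<Sum>r<n. \<Sum>p<n. A p r * B' r p) = 0" by (subst sum.swap) (simp add: v4)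
  have e7: "(\<Sum>r<n. \<Sum>p<n. B r p * A' r p) = 0" by (simp add: v5)
  have e8: "(\<Sum>r<n. \<Sum>p<n. B r p * A' p r) = 0" by (subst sum.swap) (simp add: v6)
  have Q': "Q2 mu g nab n Z j k = 2 * KK + (\<Sum>r<n. \<Sum>p<n. B r p * B' r p)"
  proof -
    have "Q2 mu g nab n Z j k = (\<Sum>r<n. \<Sum>p<n. A r p * A' r p) - (\<Sum>r<n. \<Sum>p<n. A r p * A' p r)
      + (\<Sum>r<n. \<Sum>p<n. A r p * B' r p) - (\<Sum>r<n. \<Sum>p<n. A p r * A' r p)
      + (\<Sum>r<n. \<Sum>p<n. A p r * A' p r) - (\<Sum>r<n. \<Sum>p<n. A p r * B' r p)
      + (\<Sum>r<n. \<Sum>p<n. B r p * A' r p) - (\<Sum>r<n. \<Sum>p<n. B r p * A' p r)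
      + (\<Sum>r<n. \<Sum>p<n. B r p * B' r p)"
      unfolding Q by (simp add: algebra_simps sum.distrib sum_subtractf)
    then show ?thesis by (simp add: e1 e2 e3 e4 e5 e6 e7 e8)
  qed
  have S: "S_chern mu g nab n Z j k = - KK +
      (\<Sum>r<n. \<Sum>c<n. GG (PB (BR (Z r) (zb c))) (Z j) * GG (PP (BR (zb r) (Z c))) (zb k))"
    unfolding S_chern_def KK_def
    by (simp add: S_r[OF j k] sum.distrib sum_negf sum_subtractf Gsym[of "PB _"])
  have R1: "(\<Sum>r<n. \<Sum>c<n. GG (PB (BR (Z r) (zb c))) (Z j) * GG (PP (BR (zb r) (Z c))) (zb k)) =
     (\<Sum>r<n. \<Sum>s<n. GG (PB (BR (Z s) (zb r))) (Z j) * GG (PP (BR (zb s) (Z r))) (zb k))"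
    by (rule sum.swap)
  have R2: "(\<Sum>r<n. \<Sum>p<n. B r p * B' r p) =
     (\<Sum>r<n. \<Sum>s<n. GG (BR (zb s) (zb r)) (Z j) * GG (BR (Z s) (Z r)) (zb k))"
    unfolding B_def B'_def by (subst sum.swap) (simp add: mult.commute)
  show ?thesis
    unfolding Theta_def S Q' R1 R2
    by (simp add: sum.distrib sum_distrib_left algebra_simps)
qed

end

theorem proposition2p1:
  fixes mu :: "real^'m \<Rightarrow> real^'m \<Rightarrow> real^'m"
    and J :: "real^'m \<Rightarrow> real^'m"
    and g :: "real^'m \<Rightarrow> real^'m \<Rightarrow> real"
    and nab :: "real^'m \<Rightarrow> real^'m \<Rightarrow> real^'m"
    and n :: nat and Z :: "nat \<Rightarrow> complex^'m" and j k :: nat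
  assumes "lie_algebra mu"
    and "two_step_nilpotent mu"
    and "complex_structure mu J"
    and "hermitian_metric J g"
    and "\<forall>X Y W. mu (J (mu X Y)) W = 0"
    and "chern_connection mu J g nab"
    and "unitary_frame J g n Z"
    and "j < n" and "k < n"
  shows "Theta mu g nab n Z j k =
    (\<Sum>r<n. \<Sum>s<n.
        extf g (p01 J (ext2 mu (Z s) (conjv (Z r)))) (Z j) *
        extf g (p10 J (ext2 mu (conjv (Z s)) (Z r))) (conjv (Z k))
      + (1/2) * (extf g (ext2 mu (conjv (Z s)) (conjv (Z r))) (Z j) *
                 extf g (ext2 mu (Z s) (Z r)) (conjv (Z k))))"
proof -
  interpret hctx mu J g nab n Z
    using assms by (unfold_locales) (auto simp: two_step_nilpotent_def)
  show ?thesis using main assms(8,9) by blast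
qed

end
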